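(* For every $t\ge1$, $$\mathbb E_0\big[\phi_t(\overline{\mathcal X})\big]\ge\mathbb E\big[\phi_t(\overline{\mathcal Z})\big],$$ where $\overline{\mathcal X}=(\overline{\mathcal X}(s^t))_{s^t\in\mathcal S^t}$ and $\overline{\mathcal Z}=(\overline{\mathcal Z}(s^t))_{s^t\in\mathcal S^t}$.
   Context: $V=\{1,\dots,N\}$; $P$ row-stochastic irreducible aperiodic with stationary distribution $\pi>0$; $\beta\in\mathbb R^N$. $P(s^t)=\pi_{s_1}\prod_{k<t}P_{s_ks_{k+1}}$, $\mathcal S^t=\{s^t\in V^t:P(s^t)>0\}$, $C_t=|\mathcal S^t|$, $\beta(s^t)^2=\sum_{k=1}^t\beta_{s_k}^2$. For $x=(x_{s^t})_{s^t\in\mathcal S^t}\in\mathbb R^{C_t}$, $$\phi_t(x)=-\frac1t\log\Big(\sum_{s^t\in\mathcal S^t}P(s^t)e^{-\beta(s^t)^2/2+x_{s^t}}\Big).$$ Under $\mathbb P_0$ the $X_{i,k}$ ($i\in V$, $k\ge1$) are i.i.d. $\mathcal N(0,1)$, and $\overline{\mathcal X}(s^t)=\sum_{k=1}^t\beta_{s_k}X_{s_k,k}$. On a probability space $(\Omega,\mathcal F,\mathbb P)$ (expectation $\mathbb E$), for each $s^t\in\mathcal S^t$ let $Z_{s^t}=(Z_{s^t,1},\dots,Z_{s^t,t})$ have i.i.d. $\mathcal N(0,1)$ entries, the vectors for distinct $s^t$ being independent, and $\overline{\mathcal Z}(s^t)=\sum_{k=1}^t\beta_{s_k}Z_{s^t,k}$.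 *)

theory Defs
  imports "HOL-Probability.Probability"
begin

text \<open>Vertex set V = {1..N}. A path s^t is a list of length t with entries in V;
  the k-th entry (1-based in the paper) is s ! (k-1).\<close>

fun mpow :: "nat \<Rightarrow> (nat \<Rightarrow> nat \<Rightarrow> real) \<Rightarrow> nat \<Rightarrow> nat \<Rightarrow> nat \<Rightarrow> real" where
  "mpow N P 0 i j = (if i = j then 1 else 0)"
| "mpow N P (Suc n) i j = (\<Sum>l\<in>{1..N}. mpow N P n i l * P l j)"

definition row_stochastic :: "nat \<Rightarrow> (nat \<Rightarrow> nat \<Rightarrow> real) \<Rightarrow> bool" where
  "row_stochastic N P \<longleftrightarrow> (\<forall>i\<in>{1..N}. \<forall>j\<in>{1..N}. P i j \<ge> 0) \<and>
     (\<forall>i\<in>{1..N}. (\<Sum>j\<in>{1..N}. P i j) = 1)"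

definition irreducible_chain :: "nat \<Rightarrow> (nat \<Rightarrow> nat \<Rightarrow> real) \<Rightarrow> bool" where
  "irreducible_chain N P \<longleftrightarrow> (\<forall>i\<in>{1..N}. \<forall>j\<in>{1..N}. \<exists>n>0. mpow N P n i j > 0)"

definition aperiodic_chain :: "nat \<Rightarrow> (nat \<Rightarrow> nat \<Rightarrow> real) \<Rightarrow> bool" where
  "aperiodic_chain N P \<longleftrightarrow> (\<forall>i\<in>{1..N}. Gcd {n. n > 0 \<and> mpow N P n i i > 0} = 1)"

definition stationary_dist :: "nat \<Rightarrow> (nat \<Rightarrow> nat \<Rightarrow> real) \<Rightarrow> (nat \<Rightarrow> real) \<Rightarrow> bool" where
  "stationary_dist N P mu \<longleftrightarrow> (\<forall>i\<in>{1..N}. mu i \<ge> 0) \<and> (\<Sum>i\<in>{1..N}. mu i) = 1 \<and>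
     (\<forall>j\<in>{1..N}. (\<Sum>i\<in>{1..N}. mu i * P i j) = mu j)"

definition path_prob :: "(nat \<Rightarrow> nat \<Rightarrow> real) \<Rightarrow> (nat \<Rightarrow> real) \<Rightarrow> nat list \<Rightarrow> real" where
  "path_prob P mu s = mu (s ! 0) * (\<Prod>k<length s - 1. P (s ! k) (s ! (k+1)))"

definition Spaths :: "nat \<Rightarrow> (nat \<Rightarrow> nat \<Rightarrow> real) \<Rightarrow> (nat \<Rightarrow> real) \<Rightarrow> nat \<Rightarrow> nat list set" where
  "Spaths N P mu t = {s. length s = t \<and> set s \<subseteq> {1..N} \<and> path_prob P mu s > 0}"

definition beta_sq :: "(nat \<Rightarrow> real) \<Rightarrow> nat list \<Rightarrow> real" where
  "beta_sq beta s = (\<Sum>k<length s. (beta (s ! k))\<^sup>2)"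

definition phi :: "nat \<Rightarrow> (nat \<Rightarrow> nat \<Rightarrow> real) \<Rightarrow> (nat \<Rightarrow> real) \<Rightarrow> (nat \<Rightarrow> real) \<Rightarrow> nat
    \<Rightarrow> (nat list \<Rightarrow> real) \<Rightarrow> real" where
  "phi N P mu beta t x = - (1 / real t) *
     ln (\<Sum>s\<in>Spaths N P mu t. path_prob P mu s * exp (- beta_sq beta s / 2 + x s))"

definition Xbar :: "(nat \<Rightarrow> real) \<Rightarrow> (nat \<times> nat \<Rightarrow> real) \<Rightarrow> nat list \<Rightarrow> real" where
  "Xbar beta X s = (\<Sum>k<length s. beta (s ! k) * X (s ! k, k + 1))"

definition Zbar :: "(nat \<Rightarrow> real) \<Rightarrow> (nat list \<times> nat \<Rightarrow> real) \<Rightarrow> nat list \<Rightarrow> real" where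
  "Zbar beta Z s = (\<Sum>k<length s. beta (s ! k) * Z (s, k + 1))"

end

theory Submission
  imports Defs
begin


definition Nrm :: "real measure" where
  "Nrm = density lborel (\<lambda>x. ennreal (std_normal_density x))"

lemma prob_Nrm: "prob_space Nrm"
  unfolding Nrm_def by (rule prob_space_normal_density) simp

lemma sets_Nrm[measurable_cong, simp]: "sets Nrm = sets borel"
  unfolding Nrm_def by simp

lemma space_Nrm[simp]: "space Nrm = UNIV"
  unfolding Nrm_def by simp

lemma integrable_Nrm_id: "integrable Nrm (\<lambda>x. x)"
proof -
  have "integrable lborel (\<lambda>x. std_normal_density x * x^1)"
    by (rule integrable_std_normal_moment)
  then have "integrable lborel (\<lambda>x. std_normal_density x *\<^sub>R x)" by simp
  moreover have "integrable (density lborel (\<lambda>x. ennreal (std_normal_density x))) (\<lambda>x. x) \<longleftrightarrow>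
     integrable lborel (\<lambda>x. std_normal_density x *\<^sub>R x)"
    by (rule integrable_density) auto
  ultimately show ?thesis unfolding Nrm_def by simp
qed

lemma comp_meas[measurable]:
  "(\<lambda>\<omega>. \<omega> n) \<in> borel_measurable (PiM I (\<lambda>_. Nrm))"
proof (cases "n \<in> I")
  case True
  have "(\<lambda>\<omega>. \<omega> n) \<in> measurable (PiM I (\<lambda>_. Nrm)) Nrm"
    using True by (rule measurable_component_singleton)
  then show ?thesis using measurable_cong_sets[OF refl sets_Nrm] by blast
next
  case False
  have c: "(\<lambda>\<omega>. undefined) \<in> borel_measurable (PiM I (\<lambda>_. Nrm))"
    by (rule measurable_const) simp
  have e: "\<And>\<omega>. \<omega> \<in> space (PiM I (\<lambda>_. Nrm)) \<Longrightarrow> undefined = \<omega> n"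
    using False by (auto simp: space_PiM PiE_def extensional_def)
  show ?thesis
    using measurable_cong[where M="PiM I (\<lambda>_. Nrm)" and f="\<lambda>\<omega>. undefined" and g="\<lambda>\<omega>. \<omega> n" and M'=borel] e c
    by blast
qed

lemma prob_PiNrm: "prob_space (PiM I (\<lambda>_. Nrm))"
  by (intro prob_space_PiM prob_Nrm)

lemma integrable_comp:
  assumes "n \<in> I"
  shows "integrable (PiM I (\<lambda>_. Nrm)) (\<lambda>\<omega>. \<omega> n)"
proof -
  have d: "distr (PiM I (\<lambda>_. Nrm)) Nrm (\<lambda>\<omega>. \<omega> n) = Nrm"
    using assms by (intro distr_PiM_component prob_Nrm)
  have m1: "(\<lambda>\<omega>. \<omega> n) \<in> measurable (PiM I (\<lambda>_. Nrm)) Nrm"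
    using assms by (rule measurable_component_singleton)
  have m2: "(\<lambda>x. x) \<in> borel_measurable Nrm"
    by (rule measurable_ident_sets) simp
  have iff: "integrable (distr (PiM I (\<lambda>_. Nrm)) Nrm (\<lambda>\<omega>. \<omega> n)) (\<lambda>x. x) \<longleftrightarrow>
      integrable (PiM I (\<lambda>_. Nrm)) (\<lambda>\<omega>. \<omega> n)"
    by (rule integrable_distr_eq[OF m1 m2])
  show ?thesis using iff integrable_Nrm_id by (simp only: d)
qed



lemma jensen_ln:
  fixes A :: "'a set" and l u :: "'a \<Rightarrow> real"
  assumes "finite A" "\<And>a. a \<in> A \<Longrightarrow> l a \<ge> 0" "sum l A = 1" "\<And>a. a \<in> A \<Longrightarrow> u a > 0"
  shows "(\<Sum>a\<in>A. l a * ln (u a)) \<le> ln (\<Sum>a\<in>A. l a * u a)"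
proof -
  define m where "m = (\<Sum>a\<in>A. l a * u a)"
  obtain a0 where a0: "a0 \<in> A" "l a0 > 0"
  proof -
    have "\<exists>a\<in>A. l a \<noteq> 0" using assms(3) by (metis one_neq_zero sum.neutral)
    then show ?thesis using assms(2) that by force
  qed
  have "m \<ge> l a0 * u a0" unfolding m_def
    using assms a0 by (intro member_le_sum) (auto simp: less_imp_le)
  moreover have "l a0 * u a0 > 0" using a0 assms(4) by simp
  ultimately have mpos: "m > 0" by linarith
  have le: "l a * ln (u a) \<le> l a * ln m + l a * u a / m - l a" if "a \<in> A" for a
  proof -
    have "ln (u a / m) \<le> u a / m - 1" using assms(4)[OF that] mpos by (intro ln_le_minus_one) simp
    then have "ln (u a) \<le> ln m + u a / m - 1" using assms(4)[OF that] mpos by (simp add: ln_div)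
    then have "l a * ln (u a) \<le> l a * (ln m + u a / m - 1)"
      using assms(2)[OF that] by (rule mult_left_mono)
    then show ?thesis by (simp add: algebra_simps)
  qed
  have "(\<Sum>a\<in>A. l a * ln (u a)) \<le> (\<Sum>a\<in>A. l a * ln m + l a * u a / m - l a)"
    using le by (rule sum_mono)
  also have "\<dots> = ln m * sum l A + (\<Sum>a\<in>A. l a * u a) / m - sum l A"
    by (simp add: sum.distrib sum_subtractf sum_distrib_left sum_divide_distrib mult.commute)
  also have "\<dots> = ln m * sum l A + m / m - sum l A" unfolding m_def ..
  also have "\<dots> = ln m" using assms(3) mpos by simp
  finally show ?thesis unfolding m_def .
qed

locale hyb =
  fixes S :: "nat list set" and t :: nat and W :: "nat list \<Rightarrow> real" and b :: "nat \<Rightarrow> real"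
    and r :: "nat \<times> nat \<Rightarrow> nat list"
  assumes finS: "finite S" and neS: "S \<noteq> {}"
    and lenS: "\<And>s. s \<in> S \<Longrightarrow> length s = t"
    and Wpos: "\<And>s. s \<in> S \<Longrightarrow> W s > 0"
    and rS: "\<And>s k. s \<in> S \<Longrightarrow> k < t \<Longrightarrow> r (s!k, k+1) \<in> S \<and> r (s!k, k+1) ! k = s!k"
begin

definition "IZ = S \<times> {1..t}"
definition "IXp = (\<lambda>(s,k). (s!k, k+1)) ` (S \<times> {..<t})"
abbreviation "G \<equiv> PiM IZ (\<lambda>_. Nrm)"

definition yc :: "(nat \<times> nat) set \<Rightarrow> nat list \<Rightarrow> nat \<Rightarrow> nat list \<times> nat" where
  "yc D s k = (if (s!k, k+1) \<in> D then (s, k+1) else (r (s!k, k+1), k+1))"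

definition "val D \<omega> = (\<Sum>s\<in>S. W s * exp (\<Sum>k<t. b (s!k) * \<omega> (yc D s k)))"
definition "h D \<omega> = ln (val D \<omega>)"

lemma finIZ: "finite IZ" unfolding IZ_def using finS by simp
lemma finIXp: "finite IXp" unfolding IXp_def using finS by simp

lemma yc_IZ: "s \<in> S \<Longrightarrow> k < t \<Longrightarrow> yc D s k \<in> IZ"
  unfolding yc_def IZ_def using rS by auto

lemma meas_val[measurable]: "val D \<in> borel_measurable G"
  unfolding val_def by measurable

lemma meas_h[measurable]: "h D \<in> borel_measurable G"
  unfolding h_def by measurable

lemma val_pos: "val D \<omega> > 0"
  unfolding val_def using finS neS Wpos by (intro sum_pos) auto

definition "Bd = (\<Sum>s\<in>S. \<Sum>k<t. \<bar>b (s!k)\<bar>)"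
definition "Wt = (\<Sum>s\<in>S. W s)"
definition Aw :: "(nat list \<times> nat \<Rightarrow> real) \<Rightarrow> real" where "Aw \<omega> = (\<Sum>n\<in>IZ. \<bar>\<omega> n\<bar>)"

lemma Wt_pos: "Wt > 0" unfolding Wt_def using finS neS Wpos by (intro sum_pos) auto

lemma h_bound: "\<bar>h D \<omega>\<bar> \<le> \<bar>ln Wt\<bar> + Bd * Aw \<omega>"
proof -
  define R where "R = Bd * Aw \<omega>"
  have Aw0: "Aw \<omega> \<ge> 0" unfolding Aw_def by (simp add: sum_nonneg)
  have y: "\<bar>\<Sum>k<t. b (s!k) * \<omega> (yc D s k)\<bar> \<le> R" if s: "s \<in> S" for s
  proof -
    have "\<bar>\<Sum>k<t. b (s!k) * \<omega> (yc D s k)\<bar> \<le> (\<Sum>k<t. \<bar>b (s!k)\<bar> * \<bar>\<omega> (yc D s k)\<bar>)"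
      by (rule order_trans[OF sum_abs]) (simp add: abs_mult)
    also have "\<dots> \<le> (\<Sum>k<t. \<bar>b (s!k)\<bar> * Aw \<omega>)"
    proof (rule sum_mono)
      fix k assume "k \<in> {..<t}"
      then have "yc D s k \<in> IZ" using yc_IZ s by auto
      then have "\<bar>\<omega> (yc D s k)\<bar> \<le> Aw \<omega>" unfolding Aw_def
        using finIZ by (intro member_le_sum) auto
      then show "\<bar>b (s!k)\<bar> * \<bar>\<omega> (yc D s k)\<bar> \<le> \<bar>b (s!k)\<bar> * Aw \<omega>"
        by (intro mult_left_mono) auto
    qed
    also have "\<dots> = (\<Sum>k<t. \<bar>b (s!k)\<bar>) * Aw \<omega>" by (simp add: sum_distrib_right)
    also have "\<dots> \<le> Bd * Aw \<omega>" unfolding Bd_def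
      using s finS Aw0 by (intro mult_right_mono member_le_sum[where f="\<lambda>s. \<Sum>k<t. \<bar>b (s!k)\<bar>"]) (auto intro: sum_nonneg)
    finally show ?thesis unfolding R_def .
  qed
  have up: "val D \<omega> \<le> Wt * exp R"
    unfolding val_def Wt_def sum_distrib_right
  proof (rule sum_mono)
    fix s assume s: "s \<in> S"
    have "exp (\<Sum>k<t. b (s!k) * \<omega> (yc D s k)) \<le> exp R" using y[OF s] by simp
    then show "W s * exp (\<Sum>k<t. b (s!k) * \<omega> (yc D s k)) \<le> W s * exp R"
      using Wpos[OF s] by (intro mult_left_mono) auto
  qed
  have lo: "Wt * exp (-R) \<le> val D \<omega>"
    unfolding val_def Wt_def sum_distrib_right
  proof (rule sum_mono)
    fix s assume s: "s \<in> S"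
    have "exp (-R) \<le> exp (\<Sum>k<t. b (s!k) * \<omega> (yc D s k))" using y[OF s] by simp
    then show "W s * exp (-R) \<le> W s * exp (\<Sum>k<t. b (s!k) * \<omega> (yc D s k))"
      using Wpos[OF s] by (intro mult_left_mono) auto
  qed
  have "ln (val D \<omega>) \<le> ln (Wt * exp R)"
    using up val_pos[of D \<omega>] by (subst ln_le_cancel_iff) auto
  also have "\<dots> = ln Wt + R" using Wt_pos by (simp add: ln_mult)
  finally have "h D \<omega> \<le> ln Wt + R" unfolding h_def .
  moreover have "ln (Wt * exp (-R)) \<le> ln (val D \<omega>)"
    using lo Wt_pos val_pos[of D \<omega>] by (subst ln_le_cancel_iff) auto
  then have "ln Wt - R \<le> h D \<omega>" unfolding h_def using Wt_pos by (simp add: ln_mult)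
  ultimately show ?thesis unfolding R_def by linarith
qed

lemma Aw_nonneg: "Aw \<omega> \<ge> 0" unfolding Aw_def by (simp add: sum_nonneg)
lemma Bd_nonneg: "Bd \<ge> 0" unfolding Bd_def by (simp add: sum_nonneg)

lemma integrable_Aw: "integrable G Aw"
  unfolding Aw_def
  by (rule Bochner_Integration.integrable_sum[OF integrable_abs[OF integrable_comp]])

lemma integrable_h: "integrable G (h D)"
proof (rule Bochner_Integration.integrable_bound)
  show "integrable G (\<lambda>\<omega>. \<bar>ln Wt\<bar> + Bd * Aw \<omega>)"
    using integrable_Aw prob_PiNrm[of IZ]
    by (intro Bochner_Integration.integrable_add integrable_mult_right finite_measure.integrable_const)
       (auto simp: prob_space_def)
  show "h D \<in> borel_measurable G" by measurable
  show "AE x in G. norm (h D x) \<le> norm (\<bar>ln Wt\<bar> + Bd * Aw x)"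
  proof (intro AE_I2)
    fix x
    have "Bd \<ge> 0" by (rule Bd_nonneg)
    moreover have "Aw x \<ge> 0" by (rule Aw_nonneg)
    ultimately have "\<bar>ln Wt\<bar> + Bd * Aw x \<ge> 0" by simp
    then show "norm (h D x) \<le> norm (\<bar>ln Wt\<bar> + Bd * Aw x)"
      using h_bound[of D x] by simp
  qed
qed

end


context hyb begin

lemma step:
  assumes c: "c \<in> IXp" and cD: "c \<notin> D"
  shows "integral\<^sup>L G (h D) \<le> integral\<^sup>L G (h (insert c D))"
proof -
  obtain s0 k0 where s0: "s0 \<in> S" "k0 < t" and cdef: "c = (s0!k0, k0+1)"
    using c unfolding IXp_def by auto
  define i where "i = s0!k0"
  define rc where "rc = r c"
  have rc: "rc \<in> S" "rc!k0 = i" using rS[OF s0] by (auto simp: rc_def cdef i_def)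
  define Gr where "Gr = {s\<in>S. s!k0 = i}"
  have GrS: "Gr \<subseteq> S" unfolding Gr_def by auto
  have finGr: "finite Gr" using GrS finS by (rule finite_subset)
  have rcGr: "rc \<in> Gr" unfolding Gr_def using rc by auto
  have yc_ins: "yc (insert c D) s k = (if k = k0 \<and> s \<in> Gr then (s, k0+1) else yc D s k)"
    if "s \<in> S" "k < t" for s k
    using that unfolding yc_def Gr_def cdef i_def by auto
  have yc_Gr: "yc D s k0 = (rc, k0+1)" if "s \<in> Gr" for s
    using that cD unfolding yc_def Gr_def rc_def cdef i_def by auto
  have kk: "k0 \<in> {..<t}" using s0 by simp

  define E where "E s \<omega> = (\<Sum>k\<in>{..<t}-{k0}. b (s!k) * \<omega> (yc D s k))" for s \<omega>
  define C where "C \<omega> = (\<Sum>s\<in>S-Gr. W s * exp (\<Sum>k<t. b (s!k) * \<omega> (yc D s k)))" for \<omega>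
  define p where "p s \<omega> = W s * exp (E s \<omega>)" for s \<omega>
  define Sm where "Sm \<omega> = (\<Sum>s\<in>Gr. p s \<omega>)" for \<omega>
  define lam where "lam s \<omega> = p s \<omega> / Sm \<omega>" for s \<omega>
  define q where "q s \<omega> = lam s \<omega> * ln (C \<omega> + Sm \<omega> * exp (b i * \<omega> (s, k0+1)))" for s \<omega>

  have ppos: "p s \<omega> > 0" if "s \<in> Gr" for s \<omega> using that GrS Wpos unfolding p_def by auto
  have Smpos: "Sm \<omega> > 0" for \<omega> unfolding Sm_def using finGr rcGr ppos
    by (intro sum_pos) auto
  have C0: "C \<omega> \<ge> 0" for \<omega> unfolding C_def using Wpos by (intro sum_nonneg) (auto intro: less_imp_le)
  have lam0: "lam s \<omega> \<ge> 0" if "s \<in> Gr" for s \<omega>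
    unfolding lam_def using ppos[OF that, of \<omega>] Smpos[of \<omega>] by (simp add: less_imp_le)
  have lam1: "lam s \<omega> \<le> 1" if "s \<in> Gr" for s \<omega>
  proof -
    have "p s \<omega> \<le> Sm \<omega>" unfolding Sm_def using that finGr ppos
      by (intro member_le_sum) (auto intro: less_imp_le)
    then show ?thesis unfolding lam_def using Smpos[of \<omega>] by simp
  qed
  have lamsum: "(\<Sum>s\<in>Gr. lam s \<omega>) = 1" for \<omega>
    unfolding lam_def sum_divide_distrib[symmetric] Sm_def[symmetric] using Smpos[of \<omega>] by simp

  have Ysplit: "(\<Sum>k<t. b (s!k) * \<omega> (f k)) = b (s!k0) * \<omega> (f k0) + (\<Sum>k\<in>{..<t}-{k0}. b (s!k) * \<omega> (f k))"
    for s and \<omega> :: "nat list \<times> nat \<Rightarrow> real" and f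
    using kk by (subst sum.remove[of _ k0]) auto

  have valsplit: "val D' \<omega> = (\<Sum>s\<in>S-Gr. W s * exp (\<Sum>k<t. b (s!k) * \<omega> (yc D' s k)))
      + (\<Sum>s\<in>Gr. W s * exp (\<Sum>k<t. b (s!k) * \<omega> (yc D' s k)))" for D' \<omega>
    unfolding val_def using GrS finS by (rule sum.subset_diff)

  have valD: "val D \<omega> = C \<omega> + Sm \<omega> * exp (b i * \<omega> (rc, k0+1))" for \<omega>
  proof -
    have "W s * exp (\<Sum>k<t. b (s!k) * \<omega> (yc D s k)) = p s \<omega> * exp (b i * \<omega> (rc, k0+1))"
      if "s \<in> Gr" for s
    proof -
      have "s!k0 = i" using that unfolding Gr_def by auto
      then show ?thesis
        unfolding p_def E_def
        by (subst Ysplit[of s \<omega> "yc D s"]) (simp add: yc_Gr[OF that] exp_add algebra_simps)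
    qed
    then have "(\<Sum>s\<in>Gr. W s * exp (\<Sum>k<t. b (s!k) * \<omega> (yc D s k))) = Sm \<omega> * exp (b i * \<omega> (rc, k0+1))"
      unfolding Sm_def sum_distrib_right by (rule sum.cong[OF refl])
    then show ?thesis using valsplit[of D \<omega>] unfolding C_def by simp
  qed

  have valI: "val (insert c D) \<omega> = C \<omega> + (\<Sum>s\<in>Gr. p s \<omega> * exp (b i * \<omega> (s, k0+1)))" for \<omega>
  proof -
    have A: "(\<Sum>s\<in>S-Gr. W s * exp (\<Sum>k<t. b (s!k) * \<omega> (yc (insert c D) s k))) = C \<omega>"
      unfolding C_def
    proof (rule sum.cong[OF refl])
      fix s assume s: "s \<in> S - Gr"
      have "(\<Sum>k<t. b (s!k) * \<omega> (yc (insert c D) s k)) = (\<Sum>k<t. b (s!k) * \<omega> (yc D s k))"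
        using s by (intro sum.cong refl) (simp add: yc_ins)
      then show "W s * exp (\<Sum>k<t. b (s!k) * \<omega> (yc (insert c D) s k)) = W s * exp (\<Sum>k<t. b (s!k) * \<omega> (yc D s k))"
        by simp
    qed
    have B: "W s * exp (\<Sum>k<t. b (s!k) * \<omega> (yc (insert c D) s k)) = p s \<omega> * exp (b i * \<omega> (s, k0+1))"
      if s: "s \<in> Gr" for s
    proof -
      have si: "s!k0 = i" "s \<in> S" using s unfolding Gr_def by auto
      have "(\<Sum>k\<in>{..<t}-{k0}. b (s!k) * \<omega> (yc (insert c D) s k)) = E s \<omega>"
        unfolding E_def using si by (intro sum.cong refl) (simp add: yc_ins)
      moreover have "yc (insert c D) s k0 = (s, k0+1)" using yc_ins[OF si(2) s0(2)] s by simp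
      ultimately show ?thesis
        unfolding p_def
        by (subst Ysplit[of s \<omega> "yc (insert c D) s"]) (simp add: si exp_add algebra_simps)
    qed
    show ?thesis using valsplit[of "insert c D" \<omega>] A sum.cong[OF refl B, of Gr] by simp
  qed

  have jen: "(\<Sum>s\<in>Gr. q s \<omega>) \<le> h (insert c D) \<omega>" for \<omega>
  proof -
    have "(\<Sum>s\<in>Gr. q s \<omega>) \<le> ln (\<Sum>s\<in>Gr. lam s \<omega> * (C \<omega> + Sm \<omega> * exp (b i * \<omega> (s, k0+1))))"
      unfolding q_def
      using finGr lam0 lamsum Smpos[of \<omega>] C0[of \<omega>]
      by (intro jensen_ln) (auto intro: add_nonneg_pos)
    also have "(\<Sum>s\<in>Gr. lam s \<omega> * (C \<omega> + Sm \<omega> * exp (b i * \<omega> (s, k0+1))))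
        = C \<omega> * (\<Sum>s\<in>Gr. lam s \<omega>) + (\<Sum>s\<in>Gr. p s \<omega> * exp (b i * \<omega> (s, k0+1)))"
      unfolding distrib_left sum.distrib sum_distrib_left
      using Smpos[of \<omega>] by (intro arg_cong2[where f="(+)"] sum.cong refl) (auto simp: lam_def mult.commute)
    also have "\<dots> = val (insert c D) \<omega>" using lamsum valI by simp
    finally show ?thesis unfolding h_def .
  qed

  have meas_E[measurable]: "E s \<in> borel_measurable G" for s unfolding E_def by measurable
  have meas_C[measurable]: "C \<in> borel_measurable G" unfolding C_def by measurable
  have meas_p[measurable]: "p s \<in> borel_measurable G" for s unfolding p_def by measurable
  have meas_Sm[measurable]: "Sm \<in> borel_measurable G" unfolding Sm_def by measurable
  have meas_lam[measurable]: "lam s \<in> borel_measurable G" for s unfolding lam_def by measurable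
  have meas_q[measurable]: "q s \<in> borel_measurable G" for s unfolding q_def by measurable

  have int_lamh: "integrable G (\<lambda>\<omega>. lam s \<omega> * h D \<omega>)" if s: "s \<in> Gr" for s
  proof (rule Bochner_Integration.integrable_bound[OF integrable_h[of D]])
    show "(\<lambda>\<omega>. lam s \<omega> * h D \<omega>) \<in> borel_measurable G" by measurable
    show "AE x in G. norm (lam s x * h D x) \<le> norm (h D x)"
    proof (intro AE_I2)
      fix x
      have "\<bar>lam s x\<bar> * \<bar>h D x\<bar> \<le> 1 * \<bar>h D x\<bar>"
        using lam0[OF s, of x] lam1[OF s, of x] by (intro mult_right_mono) auto
      then show "norm (lam s x * h D x) \<le> norm (h D x)" by (simp add: abs_mult)
    qed
  qed

  have swap: "integrable G (q s) \<and> integral\<^sup>L G (q s) = integral\<^sup>L G (\<lambda>\<omega>. lam s \<omega> * h D \<omega>)"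
    if s: "s \<in> Gr" for s
  proof -
    define a where "a = (s, k0+1)"
    define a' where "a' = (rc, k0+1)"
    define \<sigma> where "\<sigma> n = (if n = a then a' else if n = a' then a else n)" for n
    define T where "T \<omega> = (\<lambda>n\<in>IZ. \<omega> (\<sigma> n))" for \<omega> :: "nat list \<times> nat \<Rightarrow> real"
    have sS: "s \<in> S" "s!k0 = i" using s unfolding Gr_def by auto
    have aIZ: "a \<in> IZ" "a' \<in> IZ" unfolding a_def a'_def IZ_def using sS rc s0 by auto
    have \<sigma>IZ: "\<sigma> n \<in> IZ" if "n \<in> IZ" for n using that aIZ unfolding \<sigma>_def by auto
    have \<sigma>\<sigma>: "\<sigma> (\<sigma> n) = n" for n unfolding \<sigma>_def by auto
    have inj: "inj_on \<sigma> IZ" by (metis \<sigma>\<sigma> inj_onI)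
    have dist: "distr G (PiM IZ (\<lambda>_. Nrm)) T = G"
      unfolding T_def
      using distr_PiM_reindex[of IZ "\<lambda>_. Nrm" \<sigma> IZ] prob_Nrm inj \<sigma>IZ by auto
    have Tm[measurable]: "T \<in> measurable G G"
      unfolding T_def
      by (intro measurable_restrict measurable_component_singleton \<sigma>IZ)
    have fix_yc: "T \<omega> (yc D s' k) = \<omega> (yc D s' k)"
      if "s' \<in> S" "k < t" "\<not> (k = k0 \<and> s' \<in> Gr)" for \<omega> s' k
    proof -
      have inz: "yc D s' k \<in> IZ" using yc_IZ that by auto
      have "yc D s' k \<noteq> a \<and> yc D s' k \<noteq> a'"
      proof (cases "k = k0")
        case False then show ?thesis unfolding yc_def a_def a'_def by auto
      next
        case True
        then have ne: "s'!k0 \<noteq> i" using that unfolding Gr_def by auto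
        have "r (s'!k0, k0+1) ! k0 = s'!k0" using rS[OF that(1) s0(2)] by auto
        then show ?thesis using True ne sS rc unfolding yc_def a_def a'_def by auto
      qed
      then show ?thesis using inz unfolding T_def \<sigma>_def by auto
    qed
    have C_T: "C (T \<omega>) = C \<omega>" for \<omega>
      unfolding C_def by (intro sum.cong refl arg_cong[where f="\<lambda>x. W _ * exp x"] sum.cong) (auto simp: fix_yc)
    have E_T: "E s' (T \<omega>) = E s' \<omega>" if "s' \<in> Gr" for s' \<omega>
      unfolding E_def using that GrS by (intro sum.cong refl) (auto simp: fix_yc)
    have p_T: "p s' (T \<omega>) = p s' \<omega>" if "s' \<in> Gr" for s' \<omega>
      unfolding p_def using E_T[OF that] by simp
    have Sm_T: "Sm (T \<omega>) = Sm \<omega>" for \<omega> unfolding Sm_def using p_T by simp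
    have lam_T: "lam s (T \<omega>) = lam s \<omega>" for \<omega> unfolding lam_def using p_T[OF s] Sm_T by simp
    have Ta: "T \<omega> a = \<omega> a'" for \<omega> unfolding T_def \<sigma>_def using aIZ by simp
    have qT: "q s (T \<omega>) = lam s \<omega> * h D \<omega>" for \<omega>
      unfolding q_def h_def valD lam_T C_T Sm_T using Ta[of \<omega>] by (simp add: a_def a'_def)
    have "integrable G (q s) \<longleftrightarrow> integrable G (\<lambda>\<omega>. q s (T \<omega>))"
      using integrable_distr_eq[OF Tm meas_q[of s]] dist by simp
    then have I: "integrable G (q s)" using int_lamh[OF s] by (simp add: qT)
    have "integral\<^sup>L G (q s) = integral\<^sup>L (distr G G T) (q s)" using dist by simp
    also have "\<dots> = integral\<^sup>L G (\<lambda>\<omega>. q s (T \<omega>))" by (rule integral_distr[OF Tm meas_q])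
    also have "\<dots> = integral\<^sup>L G (\<lambda>\<omega>. lam s \<omega> * h D \<omega>)" by (simp add: qT)
    finally show ?thesis using I by simp
  qed

  have "integral\<^sup>L G (h D) = integral\<^sup>L G (\<lambda>\<omega>. \<Sum>s\<in>Gr. lam s \<omega> * h D \<omega>)"
    by (simp add: sum_distrib_right[symmetric] lamsum)
  also have "\<dots> = (\<Sum>s\<in>Gr. integral\<^sup>L G (\<lambda>\<omega>. lam s \<omega> * h D \<omega>))"
    by (rule Bochner_Integration.integral_sum) (rule int_lamh)
  also have "\<dots> = (\<Sum>s\<in>Gr. integral\<^sup>L G (q s))" using swap by simp
  also have "\<dots> = integral\<^sup>L G (\<lambda>\<omega>. \<Sum>s\<in>Gr. q s \<omega>)"
    by (rule Bochner_Integration.integral_sum[symmetric]) (use swap in blast)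
  also have "\<dots> \<le> integral\<^sup>L G (h (insert c D))"
    by (intro integral_mono Bochner_Integration.integrable_sum integrable_h jen) (use swap in blast)
  finally show ?thesis .
qed

end


context hyb begin
lemma hyb_main: "integral\<^sup>L G (h {}) \<le> integral\<^sup>L G (h IXp)"
proof -
  have "integral\<^sup>L G (h {}) \<le> integral\<^sup>L G (h D)" if "finite D" "D \<subseteq> IXp" for D
    using that
  proof (induction D rule: finite_subset_induct)
    case empty then show ?case by simp
  next
    case (insert a F)
    then show ?case using step[of a F] by linarith
  qed
  then show ?thesis using finIXp by simp
qed
end

lemma transfer:
  fixes M :: "'a measure" and Y :: "'i \<Rightarrow> 'a \<Rightarrow> real"
  assumes pM: "prob_space M" and ind: "prob_space.indep_vars M (\<lambda>_. borel) Y I" and ne: "I \<noteq> {}"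
    and dis: "\<forall>i\<in>I. distributed M lborel (Y i) (\<lambda>x. ennreal (std_normal_density x))"
  shows "(\<lambda>\<omega>. \<lambda>i\<in>I. Y i \<omega>) \<in> measurable M (PiM I (\<lambda>_. Nrm))"
    and "distr M (PiM I (\<lambda>_. Nrm)) (\<lambda>\<omega>. \<lambda>i\<in>I. Y i \<omega>) = PiM I (\<lambda>_. Nrm)"
proof -
  have ml: "Y i \<in> measurable M lborel" if "i \<in> I" for i
    using dis that distributed_measurable by blast
  then have mb: "Y i \<in> borel_measurable M" if "i \<in> I" for i
    using that measurable_cong_sets[OF refl sets_lborel] by blast
  have mN: "Y i \<in> measurable M Nrm" if "i \<in> I" for i
    using mb[OF that] measurable_cong_sets[OF refl sets_Nrm] by blast
  show m: "(\<lambda>\<omega>. \<lambda>i\<in>I. Y i \<omega>) \<in> measurable M (PiM I (\<lambda>_. Nrm))"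
    by (intro measurable_restrict mN)
  have dN: "distr M borel (Y i) = Nrm" if "i \<in> I" for i
  proof -
    have "distr M borel (Y i) = distr M lborel (Y i)" by (rule distr_cong) auto
    also have "\<dots> = density lborel (\<lambda>x. ennreal (std_normal_density x))"
      using dis that by (auto intro: distributed_distr_eq_density)
    finally show ?thesis unfolding Nrm_def .
  qed
  have "distr M (PiM I (\<lambda>_. borel)) (\<lambda>\<omega>. \<lambda>i\<in>I. Y i \<omega>) = PiM I (\<lambda>i. distr M borel (Y i))"
    using prob_space.indep_vars_iff_distr_eq_PiM'[OF pM ne, where M'="\<lambda>_. borel" and X=Y] ind mb by auto
  also have "\<dots> = PiM I (\<lambda>_. Nrm)" by (rule PiM_cong) (auto simp: dN)
  also have "distr M (PiM I (\<lambda>_. borel)) (\<lambda>\<omega>. \<lambda>i\<in>I. Y i \<omega>) = distr M (PiM I (\<lambda>_. Nrm)) (\<lambda>\<omega>. \<lambda>i\<in>I. Y i \<omega>)"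
    by (rule distr_cong) (auto intro!: sets_PiM_cong)
  finally show "distr M (PiM I (\<lambda>_. Nrm)) (\<lambda>\<omega>. \<lambda>i\<in>I. Y i \<omega>) = PiM I (\<lambda>_. Nrm)" .
qed



theorem lemma4:
  fixes N :: nat and P :: "nat \<Rightarrow> nat \<Rightarrow> real" and mu beta :: "nat \<Rightarrow> real"
    and M0 :: "'a measure" and X :: "nat \<times> nat \<Rightarrow> 'a \<Rightarrow> real"
    and M :: "'b measure" and Z :: "nat list \<times> nat \<Rightarrow> 'b \<Rightarrow> real"
    and t :: nat
  assumes "N \<ge> 1"
    and "row_stochastic N P" and "irreducible_chain N P" and "aperiodic_chain N P"
    and "stationary_dist N P mu" and "\<forall>i\<in>{1..N}. mu i > 0"
    and "prob_space M0"
    and "prob_space.indep_vars M0 (\<lambda>_. borel) X ({1..N} \<times> {1..})"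
    and "\<forall>ik\<in>{1..N} \<times> {1..}. distributed M0 lborel (X ik) (\<lambda>x. ennreal (std_normal_density x))"
    and "prob_space M"
    and "prob_space.indep_vars M (\<lambda>_. borel) Z (Spaths N P mu t \<times> {1..t})"
    and "\<forall>sk\<in>Spaths N P mu t \<times> {1..t}. distributed M lborel (Z sk) (\<lambda>x. ennreal (std_normal_density x))"
    and "t \<ge> 1"
  shows "(\<integral>\<omega>. phi N P mu beta t (Xbar beta (\<lambda>ik. X ik \<omega>)) \<partial>M0)
       \<ge> (\<integral>\<omega>. phi N P mu beta t (Zbar beta (\<lambda>sk. Z sk \<omega>)) \<partial>M)"
proof -
  note pM0 = assms(7) and indX = assms(8) and disX = assms(9)
    and pM = assms(10) and indZ = assms(11) and disZ = assms(12) and t1 = assms(13)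
  define S where "S = Spaths N P mu t"
  have finS: "finite S"
  proof -
    have "S \<subseteq> {s. set s \<subseteq> {1..N} \<and> length s = t}" unfolding S_def Spaths_def by auto
    moreover have "finite {s. set s \<subseteq> {1..N} \<and> length s = t}"
      by (rule finite_lists_length_eq) simp
    ultimately show ?thesis by (rule finite_subset)
  qed
  show ?thesis
  proof (cases "S = {}")
    case True
    then show ?thesis unfolding phi_def S_def[symmetric] by simp
  next
    case False
    define W where "W s = path_prob P mu s * exp (- beta_sq beta s / 2)" for s
    define r where "r c = (SOME s. s \<in> S \<and> s ! (snd c - 1) = fst c)" for c
    have lenS: "length s = t" if "s \<in> S" for s using that unfolding S_def Spaths_def by auto
    have setS: "set s \<subseteq> {1..N}" if "s \<in> S" for s using that unfolding S_def Spaths_def by auto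
    have rS: "r (s!k, k+1) \<in> S \<and> r (s!k, k+1) ! k = s!k" if "s \<in> S" "k < t" for s k
    proof -
      have "\<exists>s'. s' \<in> S \<and> s' ! (snd (s!k, k+1) - 1) = fst (s!k, k+1)" using that by auto
      from someI_ex[OF this] show ?thesis unfolding r_def by simp
    qed
    interpret hyb S t W beta r
    proof
      show "finite S" by fact
      show "S \<noteq> {}" by fact
      show "\<And>s. s \<in> S \<Longrightarrow> length s = t" by (rule lenS)
      show "\<And>s. s \<in> S \<Longrightarrow> W s > 0" unfolding W_def S_def Spaths_def by auto
      show "\<And>s k. s \<in> S \<Longrightarrow> k < t \<Longrightarrow> r (s!k, k+1) \<in> S \<and> r (s!k, k+1) ! k = s!k" by (rule rS)
    qed
    define FX where "FX x = ln (\<Sum>s\<in>S. W s * exp (\<Sum>k<t. beta (s!k) * x (s!k, k+1)))"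
      for x :: "nat \<times> nat \<Rightarrow> real"
    have inIXp: "(s!k, k+1) \<in> IXp" if "s \<in> S" "k < t" for s k
      unfolding IXp_def using that by force
    have phiX: "phi N P mu beta t (Xbar beta (\<lambda>ik. X ik \<omega>)) = -(1/real t) * FX (\<lambda>c\<in>IXp. X c \<omega>)" for \<omega>
    proof -
      have "path_prob P mu s * exp (- beta_sq beta s / 2 + Xbar beta (\<lambda>ik. X ik \<omega>) s)
          = W s * exp (\<Sum>k<t. beta (s!k) * (\<lambda>c\<in>IXp. X c \<omega>) (s!k, k+1))" if s: "s \<in> S" for s
      proof -
        have "Xbar beta (\<lambda>ik. X ik \<omega>) s = (\<Sum>k<t. beta (s!k) * (\<lambda>c\<in>IXp. X c \<omega>) (s!k, k+1))"
          unfolding Xbar_def lenS[OF s] using inIXp[OF s] by (intro sum.cong refl) auto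
        then show ?thesis unfolding W_def by (simp only: exp_add mult.assoc)
      qed
      then show ?thesis unfolding phi_def FX_def S_def[symmetric] by (simp cong: sum.cong)
    qed
    have phiZ: "phi N P mu beta t (Zbar beta (\<lambda>sk. Z sk \<omega>)) = -(1/real t) * h IXp (\<lambda>n\<in>IZ. Z n \<omega>)" for \<omega>
    proof -
      have "path_prob P mu s * exp (- beta_sq beta s / 2 + Zbar beta (\<lambda>sk. Z sk \<omega>) s)
          = W s * exp (\<Sum>k<t. beta (s!k) * (\<lambda>n\<in>IZ. Z n \<omega>) (yc IXp s k))" if s: "s \<in> S" for s
      proof -
        have "Zbar beta (\<lambda>sk. Z sk \<omega>) s = (\<Sum>k<t. beta (s!k) * (\<lambda>n\<in>IZ. Z n \<omega>) (yc IXp s k))"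
          unfolding Zbar_def lenS[OF s] using inIXp[OF s] s
          by (intro sum.cong refl) (auto simp: yc_def IZ_def)
        then show ?thesis unfolding W_def by (simp only: exp_add mult.assoc)
      qed
      then show ?thesis unfolding phi_def h_def val_def S_def[symmetric] by (simp cong: sum.cong)
    qed

    have IXsub: "IXp \<subseteq> {1..N} \<times> {1..}"
    proof
      fix c assume "c \<in> IXp"
      then obtain s k where sk: "s \<in> S" "k < t" "c = (s!k, k+1)" unfolding IXp_def by auto
      then have "s!k \<in> set s" using lenS by auto
      then show "c \<in> {1..N} \<times> {1..}" using setS[OF sk(1)] sk(3) by auto
    qed
    obtain s1 where s1: "s1 \<in> S" using False by auto
    have IXne: "IXp \<noteq> {}" using inIXp[OF s1, of 0] t1 by auto
    have IZne: "IZ \<noteq> {}" using s1 t1 unfolding IZ_def by auto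
    have indX': "prob_space.indep_vars M0 (\<lambda>_. borel) X IXp"
      using prob_space.indep_vars_subset[OF pM0 indX IXsub] .
    have disX': "\<forall>i\<in>IXp. distributed M0 lborel (X i) (\<lambda>x. ennreal (std_normal_density x))"
      using disX IXsub by blast
    note TX = transfer[OF pM0 indX' IXne disX']
    have IZeq0: "IZ = S \<times> {1..t}" by (rule IZ_def)
    have IZeq: "IZ = Spaths N P mu t \<times> {1..t}" using IZeq0 unfolding S_def .
    have indZ': "prob_space.indep_vars M (\<lambda>_. borel) Z IZ" unfolding IZeq by (rule indZ)
    have disZ': "\<forall>i\<in>IZ. distributed M lborel (Z i) (\<lambda>x. ennreal (std_normal_density x))"
      unfolding IZeq by (rule disZ)
    note TZ = transfer[OF pM indZ' IZne disZ']

    have mFX: "FX \<in> borel_measurable (PiM IXp (\<lambda>_. Nrm))" unfolding FX_def by measurable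
    define f where "f c = (r c, snd c)" for c
    have fIZ: "f \<in> IXp \<rightarrow> IZ"
    proof
      fix c assume "c \<in> IXp"
      then obtain s k where sk: "s \<in> S" "k < t" "c = (s!k, k+1)" unfolding IXp_def by auto
      then show "f c \<in> IZ" unfolding f_def IZeq0 using rS[OF sk(1,2)] by simp
    qed
    have finj: "inj_on f IXp"
    proof
      fix c c' assume c: "c \<in> IXp" and c': "c' \<in> IXp" and eq: "f c = f c'"
      obtain s k where sk: "s \<in> S" "k < t" "c = (s!k, k+1)" using c unfolding IXp_def by auto
      obtain s' k' where sk': "s' \<in> S" "k' < t" "c' = (s'!k', k'+1)" using c' unfolding IXp_def by auto
      have kk: "k = k'" using eq sk(3) sk'(3) unfolding f_def by simp
      have rr: "r c = r c'" using eq unfolding f_def by simp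
      have "s!k = r c ! k" using rS[OF sk(1,2)] sk(3) by simp
      also have "\<dots> = r c' ! k'" using rr kk by simp
      also have "\<dots> = s'!k'" using rS[OF sk'(1,2)] sk'(3) by simp
      finally show "c = c'" using sk(3) sk'(3) kk by simp
    qed
    have dR: "distr G (PiM IXp (\<lambda>_. Nrm)) (\<lambda>\<omega>. \<lambda>n\<in>IXp. \<omega> (f n)) = PiM IXp (\<lambda>_. Nrm)"
      using distr_PiM_reindex[of IZ "\<lambda>_. Nrm" f IXp] prob_Nrm finj fIZ by auto
    have mR: "(\<lambda>\<omega>. \<lambda>n\<in>IXp. \<omega> (f n)) \<in> measurable G (PiM IXp (\<lambda>_. Nrm))"
      using fIZ by (intro measurable_restrict measurable_component_singleton) auto
    have FXh: "FX (\<lambda>n\<in>IXp. \<omega> (f n)) = h {} \<omega>" for \<omega>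
      unfolding FX_def h_def val_def
      using inIXp by (intro arg_cong[where f=ln] sum.cong refl arg_cong[where f="\<lambda>x. W _ * exp x"])
        (auto simp: yc_def f_def)

    have L: "(\<integral>\<omega>. FX (\<lambda>c\<in>IXp. X c \<omega>) \<partial>M0) = integral\<^sup>L G (h {})"
    proof -
      have "(\<integral>\<omega>. FX (\<lambda>c\<in>IXp. X c \<omega>) \<partial>M0) = integral\<^sup>L (distr M0 (PiM IXp (\<lambda>_. Nrm)) (\<lambda>\<omega>. \<lambda>c\<in>IXp. X c \<omega>)) FX"
        by (rule integral_distr[OF TX(1) mFX, symmetric])
      also have "\<dots> = integral\<^sup>L (PiM IXp (\<lambda>_. Nrm)) FX" using TX(2) by simp
      also have "\<dots> = integral\<^sup>L (distr G (PiM IXp (\<lambda>_. Nrm)) (\<lambda>\<omega>. \<lambda>n\<in>IXp. \<omega> (f n))) FX"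
        using dR by simp
      also have "\<dots> = integral\<^sup>L G (\<lambda>\<omega>. FX (\<lambda>n\<in>IXp. \<omega> (f n)))"
        by (rule integral_distr[OF mR mFX])
      also have "\<dots> = integral\<^sup>L G (h {})" by (simp add: FXh)
      finally show ?thesis .
    qed
    have R: "(\<integral>\<omega>. h IXp (\<lambda>n\<in>IZ. Z n \<omega>) \<partial>M) = integral\<^sup>L G (h IXp)"
    proof -
      have "(\<integral>\<omega>. h IXp (\<lambda>n\<in>IZ. Z n \<omega>) \<partial>M) = integral\<^sup>L (distr M G (\<lambda>\<omega>. \<lambda>n\<in>IZ. Z n \<omega>)) (h IXp)"
        by (rule integral_distr[OF TZ(1) meas_h, symmetric])
      also have "\<dots> = integral\<^sup>L G (h IXp)" using TZ(2) by simp
      finally show ?thesis .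
    qed
    have "(\<integral>\<omega>. phi N P mu beta t (Xbar beta (\<lambda>ik. X ik \<omega>)) \<partial>M0) = -(1/real t) * integral\<^sup>L G (h {})"
      unfolding phiX by (simp add: L)
    moreover have "(\<integral>\<omega>. phi N P mu beta t (Zbar beta (\<lambda>sk. Z sk \<omega>)) \<partial>M) = -(1/real t) * integral\<^sup>L G (h IXp)"
      unfolding phiZ by (simp add: R)
    moreover have "-(1/real t) * integral\<^sup>L G (h IXp) \<le> -(1/real t) * integral\<^sup>L G (h {})"
      using hyb_main t1 by (intro mult_left_mono_neg) auto
    ultimately show ?thesis by simp
  qed
qed


end
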